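(* Let $N\ge1$, $1\le m\le N$, $\alpha>0$, and $V$ a real symmetric positive definite $N\times N$ matrix. Let $A=\begin{pmatrix}0&E\\-V&-\alpha D\end{pmatrix}$ and $C_G=\frac1{2\alpha}\begin{pmatrix}V^{-1}&0\\0&E\end{pmatrix}$. For $z\in\mathbb{C}$ define $$\rho(z)=(V+z^2)^{-1},\quad \kappa(z)=\hat e^T\rho(z)\hat e,\quad \tau(z)=E^{(m)}+\alpha z\kappa(z),\quad T(z)=\alpha\hat e\,\tau(z)^{-1}\hat e^T,\quad \theta(z)=\rho(z)T(z)\rho(z).$$ Then, for every $z$ at which $A-z$, $V+z^2$ and $\tau(z)$ are invertible, $$(A-z)^{-1}C_G=\frac1{2\alpha}\begin{pmatrix}Q_{11}&Q_{12}\\Q_{21}&Q_{22}\end{pmatrix}$$ with $N\times N$ blocks $$Q_{11}=-z\rho(z)V^{-1}-\theta(z),\quad Q_{12}=-\rho(z)+z\theta(z),\quad Q_{21}=zQ_{11}+V^{-1},\quad Q_{22}=zQ_{12}.$$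
   Context: $E$ is the $N\times N$ identity, $E^{(m)}$ the $m\times m$ identity, $D$ the diagonal $N\times N$ matrix with $D_{k,k}=1$ for $k\in\{N-m+1,\dots,N\}$ and $0$ otherwise, and $\hat e$ the $N\times m$ matrix whose only nonzero entries are $\hat e_{N-m+i,i}=1$, $i=1,\dots,m$ (so $\kappa(z)$ is the restriction of $\rho(z)$ to indices $N-m+1,\dots,N$). *)

theory Defs
  imports Complex_Main "Jordan_Normal_Form.Matrix"
begin

definition mat_inv :: "'a :: semiring_1 mat \<Rightarrow> 'a mat" where
  "mat_inv M = (THE B. B \<in> carrier_mat (dim_row M) (dim_row M) \<and> inverts_mat M B \<and> inverts_mat B M)"

definition sym_pos_def :: "nat \<Rightarrow> real mat \<Rightarrow> bool" where
  "sym_pos_def n W \<longleftrightarrow> W \<in> carrier_mat n n \<and> transpose_mat W = W \<and>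
     (\<forall>x \<in> carrier_vec n. x \<noteq> 0\<^sub>v n \<longrightarrow> x \<bullet> (W *\<^sub>v x) > 0)"

definition Dmat :: "nat \<Rightarrow> nat \<Rightarrow> complex mat" where
  "Dmat N m = mat N N (\<lambda>(i,j). if i = j \<and> N - m \<le> i then 1 else 0)"

definition ehat :: "nat \<Rightarrow> nat \<Rightarrow> complex mat" where
  "ehat N m = mat N m (\<lambda>(i,j). if i = N - m + j then 1 else 0)"

definition Amat :: "nat \<Rightarrow> nat \<Rightarrow> real \<Rightarrow> complex mat \<Rightarrow> complex mat" where
  "Amat N m \<alpha> V = four_block_mat (0\<^sub>m N N) (1\<^sub>m N) (- V) (- (complex_of_real \<alpha> \<cdot>\<^sub>m Dmat N m))"

definition CG :: "nat \<Rightarrow> real \<Rightarrow> complex mat \<Rightarrow> complex mat" where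
  "CG N \<alpha> V = complex_of_real (1 / (2 * \<alpha>)) \<cdot>\<^sub>m
      four_block_mat (mat_inv V) (0\<^sub>m N N) (0\<^sub>m N N) (1\<^sub>m N)"

definition rho :: "nat \<Rightarrow> complex mat \<Rightarrow> complex \<Rightarrow> complex mat" where
  "rho N V z = mat_inv (V + (z^2) \<cdot>\<^sub>m 1\<^sub>m N)"

definition kappa :: "nat \<Rightarrow> nat \<Rightarrow> complex mat \<Rightarrow> complex \<Rightarrow> complex mat" where
  "kappa N m V z = transpose_mat (ehat N m) * rho N V z * ehat N m"

definition tau :: "nat \<Rightarrow> nat \<Rightarrow> real \<Rightarrow> complex mat \<Rightarrow> complex \<Rightarrow> complex mat" where
  "tau N m \<alpha> V z = 1\<^sub>m m + (complex_of_real \<alpha> * z) \<cdot>\<^sub>m kappa N m V z"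

definition Tmat :: "nat \<Rightarrow> nat \<Rightarrow> real \<Rightarrow> complex mat \<Rightarrow> complex \<Rightarrow> complex mat" where
  "Tmat N m \<alpha> V z = complex_of_real \<alpha> \<cdot>\<^sub>m (ehat N m * mat_inv (tau N m \<alpha> V z) * transpose_mat (ehat N m))"

definition theta :: "nat \<Rightarrow> nat \<Rightarrow> real \<Rightarrow> complex mat \<Rightarrow> complex \<Rightarrow> complex mat" where
  "theta N m \<alpha> V z = rho N V z * Tmat N m \<alpha> V z * rho N V z"

end

theory Submission imports Defs "Jordan_Normal_Form.Determinant" begin


lemma mA: "dim_col A = dim_row B \<Longrightarrow> dim_col B = dim_row C \<Longrightarrow> A * B * C = A * (B * C)"
  by (rule assoc_mult_mat[OF carrier_matI carrier_matI carrier_matI]) auto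
lemma mDl: "dim_col A = dim_row B \<Longrightarrow> dim_row C = dim_row B \<Longrightarrow> dim_col C = dim_col B \<Longrightarrow> A * (B + C) = A * B + A * C"
  by (rule mult_add_distrib_mat[OF carrier_matI carrier_matI carrier_matI]) auto
lemma mDr: "dim_col A = dim_row C \<Longrightarrow> dim_row A = dim_row B \<Longrightarrow> dim_col A = dim_col B \<Longrightarrow> (A + B) * C = A * C + B * C"
  by (rule add_mult_distrib_mat[OF carrier_matI carrier_matI carrier_matI]) auto
lemma mSl: "dim_col A = dim_row B \<Longrightarrow> (k \<cdot>\<^sub>m A) * B = (k::'a::comm_ring_1) \<cdot>\<^sub>m (A * B)"
  by (rule eq_matI) auto
lemma mSr: "dim_col A = dim_row B \<Longrightarrow> A * (k \<cdot>\<^sub>m B) = (k::'a::comm_ring_1) \<cdot>\<^sub>m (A * B)"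
  by (rule eq_matI) auto
lemma mSS: "k \<cdot>\<^sub>m (l \<cdot>\<^sub>m A) = ((k::'a::comm_ring_1) * l) \<cdot>\<^sub>m A"
  by (rule eq_matI) auto
lemma mSadd: "dim_row A = dim_row B \<Longrightarrow> dim_col A = dim_col B \<Longrightarrow> k \<cdot>\<^sub>m (A + B) = (k::'a::comm_ring_1) \<cdot>\<^sub>m A + k \<cdot>\<^sub>m B"
  by (rule eq_matI) (auto simp: algebra_simps)
lemma mNeg: "- A = (-1::'a::comm_ring_1) \<cdot>\<^sub>m A"
  by (rule eq_matI) auto
lemma mMinus: "dim_row A = dim_row B \<Longrightarrow> dim_col A = dim_col B \<Longrightarrow> A - B = A + (-1::'a::comm_ring_1) \<cdot>\<^sub>m B"
  by (rule eq_matI) auto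
lemma m1l: "dim_row A = n \<Longrightarrow> 1\<^sub>m n * A = (A::'a::semiring_1 mat)"
  by (rule left_mult_one_mat[OF carrier_matI]) auto
lemma m1r: "dim_col A = n \<Longrightarrow> A * 1\<^sub>m n = (A::'a::semiring_1 mat)"
  by (rule right_mult_one_mat[OF carrier_matI]) auto

lemma mat_entry: "A = B \<Longrightarrow> A $$ (i,j) = B $$ (i,j)" by simp

lemmas NORM = mA mDl mDr mSl mSr mSS mSadd mNeg mMinus m1l m1r

lemma mat_inv_eq:
  fixes A B :: "'a::field mat"
  assumes A: "A \<in> carrier_mat n n" and B: "B \<in> carrier_mat n n" and AB: "A * B = 1\<^sub>m n"
  shows "mat_inv A = B"
proof -
  have BA: "B * A = 1\<^sub>m n" by (rule mat_mult_left_right_inverse[OF A B AB])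
  show ?thesis unfolding mat_inv_def
  proof (rule the_equality)
    show "B \<in> carrier_mat (dim_row A) (dim_row A) \<and> inverts_mat A B \<and> inverts_mat B A"
      using A B AB BA by (auto simp: inverts_mat_def)
  next
    fix C assume "C \<in> carrier_mat (dim_row A) (dim_row A) \<and> inverts_mat A C \<and> inverts_mat C A"
    hence C: "C \<in> carrier_mat n n" and AC: "A * C = 1\<^sub>m n" using A by (auto simp: inverts_mat_def)
    have "C = (B * A) * C" using BA C by simp
    also have "\<dots> = B * (A * C)" using A B C by simp
    also have "\<dots> = B" using AC B by simp
    finally show "C = B" .
  qed
qed

lemma mat_inv_props:
  fixes A :: "'a::field mat"
  assumes "invertible_mat A" and A: "A \<in> carrier_mat n n"
  shows "mat_inv A \<in> carrier_mat n n" "A * mat_inv A = 1\<^sub>m n" "mat_inv A * A = 1\<^sub>m n"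
proof -
  obtain B where AB: "A * B = 1\<^sub>m n" and BA: "B * A = 1\<^sub>m (dim_row B)"
    using assms unfolding invertible_mat_def inverts_mat_def by auto
  have B: "B \<in> carrier_mat n n"
  proof (rule carrier_matI)
    show "dim_col B = n" using arg_cong[OF AB, of dim_col] by simp
    show "dim_row B = n" using arg_cong[OF BA, of dim_col] A by simp
  qed
  have "mat_inv A = B" by (rule mat_inv_eq[OF A B AB])
  then show "mat_inv A \<in> carrier_mat n n" "A * mat_inv A = 1\<^sub>m n" "mat_inv A * A = 1\<^sub>m n"
    using B AB mat_mult_left_right_inverse[OF A B AB] by auto
qed

lemma V_inv:
  assumes "sym_pos_def N Vr" and V: "V = map_mat complex_of_real Vr"
  shows "invertible_mat V"
proof -
  have Vr: "Vr \<in> carrier_mat N N" using assms(1) by (simp add: sym_pos_def_def)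
  have "det Vr \<noteq> 0"
  proof
    assume "det Vr = 0"
    then obtain v where v: "v \<in> carrier_vec N" "v \<noteq> 0\<^sub>v N" "Vr *\<^sub>v v = 0\<^sub>v N"
      using det_0_iff_vec_prod_zero[OF Vr] by auto
    have "v \<bullet> (Vr *\<^sub>v v) > 0" using assms(1) v(1,2) unfolding sym_pos_def_def by blast
    moreover have "v \<bullet> (Vr *\<^sub>v v) = 0" using v by (simp add: scalar_prod_right_zero)
    ultimately show False by simp
  qed
  have VC: "V \<in> carrier_mat N N" using Vr V by auto
  have "det V \<noteq> 0" using \<open>det Vr \<noteq> 0\<close> V by simp
  from det_non_zero_imp_unit[OF VC this, of undefined]
  obtain B where "B \<in> carrier_mat N N" "V * B = 1\<^sub>m N" "B * V = 1\<^sub>m N"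
    unfolding Units_def ring_mat_def by auto
  then show ?thesis using VC unfolding invertible_mat_def inverts_mat_def square_mat.simps
    by (metis carrier_matD(1) carrier_matD(2))
qed

lemma core:
  fixes V Vi \<rho> D e ti T :: "complex mat" and c z :: complex
  assumes V: "V \<in> carrier_mat n n" and Vi: "Vi \<in> carrier_mat n n"
    and rc: "\<rho> \<in> carrier_mat n n" and Dc: "D \<in> carrier_mat n n"
    and ec: "e \<in> carrier_mat n m" and tic: "ti \<in> carrier_mat m m"
    and VVi: "V * Vi = 1\<^sub>m n"
    and Wr: "(V + (z^2) \<cdot>\<^sub>m 1\<^sub>m n) * \<rho> = 1\<^sub>m n" and rW: "\<rho> * (V + (z^2) \<cdot>\<^sub>m 1\<^sub>m n) = 1\<^sub>m n"
    and De: "D = e * transpose_mat e"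
    and tt: "(1\<^sub>m m + (c * z) \<cdot>\<^sub>m (transpose_mat e * \<rho> * e)) * ti = 1\<^sub>m m"
    and T: "T = c \<cdot>\<^sub>m (e * ti * transpose_mat e)"
  shows "four_block_mat (- (z \<cdot>\<^sub>m 1\<^sub>m n)) (1\<^sub>m n) (- V) (- (c \<cdot>\<^sub>m D) - z \<cdot>\<^sub>m 1\<^sub>m n) *
     four_block_mat (- (z \<cdot>\<^sub>m (\<rho> * Vi)) - \<rho> * T * \<rho>) (- \<rho> + z \<cdot>\<^sub>m (\<rho> * T * \<rho>))
        (z \<cdot>\<^sub>m (- (z \<cdot>\<^sub>m (\<rho> * Vi)) - \<rho> * T * \<rho>) + Vi) (z \<cdot>\<^sub>m (- \<rho> + z \<cdot>\<^sub>m (\<rho> * T * \<rho>)))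
   = four_block_mat Vi (0\<^sub>m n n) (0\<^sub>m n n) (1\<^sub>m n)"
proof -
  define et where "et = transpose_mat e"
  have etc: "et \<in> carrier_mat m n" using ec et_def by auto
  have Tc: "T \<in> carrier_mat n n" using T ec tic by auto
  have dims: "dim_row V = n" "dim_col V = n" "dim_row Vi = n" "dim_col Vi = n"
     "dim_row \<rho> = n" "dim_col \<rho> = n" "dim_row D = n" "dim_col D = n"
     "dim_row e = n" "dim_col e = m" "dim_row et = m" "dim_col et = n" "dim_row ti = m" "dim_col ti = m"
     "dim_row T = n" "dim_col T = n"
    using V Vi rc Dc ec etc tic Tc by auto
  have f1: "e * ((1\<^sub>m m + (c * z) \<cdot>\<^sub>m (et * \<rho> * e)) * ti) * et = e * 1\<^sub>m m * et"
    using tt et_def by simp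
  then have f1': "e * (ti * et) + (c * z) \<cdot>\<^sub>m (e * (et * (\<rho> * (e * (ti * et))))) = e * et"
    by (simp add: NORM dims)
  have K: "T + (c*z) \<cdot>\<^sub>m (D * (\<rho> * T)) = c \<cdot>\<^sub>m D" unfolding T De et_def[symmetric]
    apply (simp add: NORM dims)
    apply (rule eq_matI)
    subgoal for i j using arg_cong[OF f1'[symmetric], of "\<lambda>M. M $$ (i,j)"]
      by (simp add: dims algebra_simps del: index_mult_mat(1))
    by (simp_all add: dims)
  have ra: "V * \<rho> = 1\<^sub>m n - z^2 \<cdot>\<^sub>m \<rho>"
  proof -
    have "V * \<rho> = (V + (z^2) \<cdot>\<^sub>m 1\<^sub>m n) * \<rho> - z^2 \<cdot>\<^sub>m \<rho>"
      by (simp add: NORM dims; (rule eq_matI, simp_all add: dims algebra_simps del: index_mult_mat(1)))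
    then show ?thesis using Wr by simp
  qed
  have rb: "V * (\<rho> * Vi) = Vi - z^2 \<cdot>\<^sub>m (\<rho> * Vi)"
  proof -
    have "V * (\<rho> * Vi) = (V * \<rho>) * Vi" using V rc Vi by simp
    also have "\<dots> = (1\<^sub>m n - z^2 \<cdot>\<^sub>m \<rho>) * Vi" using ra by simp
    also have "\<dots> = Vi - z^2 \<cdot>\<^sub>m (\<rho> * Vi)"
      by (simp add: NORM dims; (rule eq_matI, simp_all add: dims algebra_simps del: index_mult_mat(1)))
    finally show ?thesis .
  qed
  have rc': "V * (\<rho> * (T * \<rho>)) = T * \<rho> - z^2 \<cdot>\<^sub>m (\<rho> * (T * \<rho>))"
  proof -
    have "V * (\<rho> * (T * \<rho>)) = (V * \<rho>) * (T * \<rho>)" using V rc Tc by (simp add: mA dims)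
    also have "\<dots> = (1\<^sub>m n - z^2 \<cdot>\<^sub>m \<rho>) * (T * \<rho>)" using ra by simp
    also have "\<dots> = T * \<rho> - z^2 \<cdot>\<^sub>m (\<rho> * (T * \<rho>))"
      by (simp add: NORM dims; (rule eq_matI, simp_all add: dims algebra_simps del: index_mult_mat(1)))
    finally show ?thesis .
  qed
  have rd: "T * \<rho> = c \<cdot>\<^sub>m (D * \<rho>) - (c*z) \<cdot>\<^sub>m (D * (\<rho> * (T * \<rho>)))"
  proof -
    have "T * \<rho> = (T + (c*z) \<cdot>\<^sub>m (D * (\<rho> * T))) * \<rho> - (c*z) \<cdot>\<^sub>m (D * (\<rho> * (T * \<rho>)))"
      by (simp add: NORM dims; (rule eq_matI, simp_all add: dims algebra_simps del: index_mult_mat(1)))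
    also have "\<dots> = (c \<cdot>\<^sub>m D) * \<rho> - (c*z) \<cdot>\<^sub>m (D * (\<rho> * (T * \<rho>)))" using K by simp
    also have "\<dots> = c \<cdot>\<^sub>m (D * \<rho>) - (c*z) \<cdot>\<^sub>m (D * (\<rho> * (T * \<rho>)))"
      using Dc rc by (simp add: mSl dims)
    finally show ?thesis .
  qed
  have re: "D * Vi = D * \<rho> + z^2 \<cdot>\<^sub>m (D * (\<rho> * Vi))"
  proof -
    have "D * Vi = D * ((\<rho> * (V + (z^2) \<cdot>\<^sub>m 1\<^sub>m n)) * Vi)" using rW Vi Dc by simp
    also have "\<dots> = D * \<rho> + z^2 \<cdot>\<^sub>m (D * (\<rho> * Vi))"
      by (simp add: NORM dims VVi; (rule eq_matI, simp_all add: dims algebra_simps del: index_mult_mat(1)))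
    finally show ?thesis .
  qed
  note R = mat_entry[OF ra] mat_entry[OF rb] mat_entry[OF rc'] mat_entry[OF rd] mat_entry[OF re]
  have c1: "- (z \<cdot>\<^sub>m 1\<^sub>m n) \<in> carrier_mat n n" "1\<^sub>m n \<in> carrier_mat n n" "- V \<in> carrier_mat n n"
     "- (c \<cdot>\<^sub>m D) - z \<cdot>\<^sub>m 1\<^sub>m n \<in> carrier_mat n n" using V Dc by auto
  have c2: "- (z \<cdot>\<^sub>m (\<rho> * Vi)) - \<rho> * T * \<rho> \<in> carrier_mat n n"
     "- \<rho> + z \<cdot>\<^sub>m (\<rho> * T * \<rho>) \<in> carrier_mat n n"
     "z \<cdot>\<^sub>m (- (z \<cdot>\<^sub>m (\<rho> * Vi)) - \<rho> * T * \<rho>) + Vi \<in> carrier_mat n n"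
     "z \<cdot>\<^sub>m (- \<rho> + z \<cdot>\<^sub>m (\<rho> * T * \<rho>)) \<in> carrier_mat n n"
    using rc Vi Tc by auto
  have h1: "- (z \<cdot>\<^sub>m 1\<^sub>m n) * (- (z \<cdot>\<^sub>m (\<rho> * Vi)) - \<rho> * T * \<rho>) + 1\<^sub>m n * (z \<cdot>\<^sub>m (- (z \<cdot>\<^sub>m (\<rho> * Vi)) - \<rho> * T * \<rho>) + Vi) = Vi"
    by (simp add: NORM dims; (rule eq_matI, simp_all add: dims algebra_simps power2_eq_square R del: index_mult_mat(1)))
  have h2: "- (z \<cdot>\<^sub>m 1\<^sub>m n) * (- \<rho> + z \<cdot>\<^sub>m (\<rho> * T * \<rho>)) + 1\<^sub>m n * (z \<cdot>\<^sub>m (- \<rho> + z \<cdot>\<^sub>m (\<rho> * T * \<rho>))) = 0\<^sub>m n n"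
    by (simp add: NORM dims; (rule eq_matI, simp_all add: dims algebra_simps power2_eq_square R del: index_mult_mat(1)))
  have h3: "- V * (- (z \<cdot>\<^sub>m (\<rho> * Vi)) - \<rho> * T * \<rho>) + (- (c \<cdot>\<^sub>m D) - z \<cdot>\<^sub>m 1\<^sub>m n) * (z \<cdot>\<^sub>m (- (z \<cdot>\<^sub>m (\<rho> * Vi)) - \<rho> * T * \<rho>) + Vi) = 0\<^sub>m n n"
    by (simp add: NORM dims; (rule eq_matI, simp_all add: dims algebra_simps power2_eq_square R del: index_mult_mat(1)))
  have h4: "- V * (- \<rho> + z \<cdot>\<^sub>m (\<rho> * T * \<rho>)) + (- (c \<cdot>\<^sub>m D) - z \<cdot>\<^sub>m 1\<^sub>m n) * (z \<cdot>\<^sub>m (- \<rho> + z \<cdot>\<^sub>m (\<rho> * T * \<rho>))) = 1\<^sub>m n"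
    by (simp add: NORM dims; (rule eq_matI, simp_all add: dims algebra_simps power2_eq_square R del: index_mult_mat(1)))
  show ?thesis
    unfolding mult_four_block_mat[OF c1 c2] h1 h2 h3 h4 ..
qed
  

lemma De: assumes "m \<le> N" shows "Dmat N m = ehat N m * transpose_mat (ehat N m)"
proof (rule eq_matI)
  fix i j assume ij: "i < dim_row (ehat N m * transpose_mat (ehat N m))" "j < dim_col (ehat N m * transpose_mat (ehat N m))"
  then have i: "i < N" and j: "j < N" by (auto simp: ehat_def)
  have "(ehat N m * transpose_mat (ehat N m)) $$ (i,j) = (\<Sum>k\<in>{0..<m}. (if i = N - m + k then 1 else 0) * (if j = N - m + k then 1 else 0 :: complex))"
    using i j by (simp add: ehat_def scalar_prod_def)
  also have "\<dots> = (\<Sum>k\<in>{0..<m}. if k = i - (N - m) then (if i = j \<and> N - m \<le> i then 1 else 0) else 0)"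
    using i j assms by (intro sum.cong) auto
  also have "\<dots> = (if i = j \<and> N - m \<le> i then 1 else 0)"
    using i j assms by (auto simp add: sum.delta)
  finally show "Dmat N m $$ (i, j) = (ehat N m * transpose_mat (ehat N m)) $$ (i, j)"
    using i j by (simp add: Dmat_def)
qed (auto simp: Dmat_def ehat_def)
lemma Mblock:
  assumes "V \<in> carrier_mat N N"
  shows "Amat N m \<alpha> V - z \<cdot>\<^sub>m 1\<^sub>m (2 * N) = four_block_mat (- (z \<cdot>\<^sub>m 1\<^sub>m N)) (1\<^sub>m N) (- V) (- (complex_of_real \<alpha> \<cdot>\<^sub>m Dmat N m) - z \<cdot>\<^sub>m 1\<^sub>m N)"
  using assms by (intro eq_matI) (auto simp: Amat_def Dmat_def)

theorem lemma5:
  fixes N m :: nat and \<alpha> :: real and Vr :: "real mat" and z :: complex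
  assumes "1 \<le> N" and "1 \<le> m" and "m \<le> N" and "\<alpha> > 0"
    and "sym_pos_def N Vr"
    and "V = map_mat complex_of_real Vr"
    and "invertible_mat (Amat N m \<alpha> V - z \<cdot>\<^sub>m 1\<^sub>m (2 * N))"
    and "invertible_mat (V + (z^2) \<cdot>\<^sub>m 1\<^sub>m N)"
    and "invertible_mat (tau N m \<alpha> V z)"
  shows "let Q11 = - (z \<cdot>\<^sub>m (rho N V z * mat_inv V)) - theta N m \<alpha> V z;
             Q12 = - rho N V z + z \<cdot>\<^sub>m theta N m \<alpha> V z;
             Q21 = z \<cdot>\<^sub>m Q11 + mat_inv V;
             Q22 = z \<cdot>\<^sub>m Q12
         in mat_inv (Amat N m \<alpha> V - z \<cdot>\<^sub>m 1\<^sub>m (2 * N)) * CG N \<alpha> V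
            = complex_of_real (1 / (2 * \<alpha>)) \<cdot>\<^sub>m four_block_mat Q11 Q12 Q21 Q22"
proof -
  have Vr: "Vr \<in> carrier_mat N N" using assms(5) by (simp add: sym_pos_def_def)
  have Vc: "V \<in> carrier_mat N N" using Vr assms(6) by auto
  note Vinv = mat_inv_props[OF V_inv[OF assms(5,6)] Vc]
  have Wc: "V + (z^2) \<cdot>\<^sub>m 1\<^sub>m N \<in> carrier_mat N N" using Vc by auto
  note Winv = mat_inv_props[OF assms(8) Wc]
  have ec: "ehat N m \<in> carrier_mat N m" by (simp add: ehat_def)
  have Dc: "Dmat N m \<in> carrier_mat N N" by (simp add: Dmat_def)
  have tauc: "tau N m \<alpha> V z \<in> carrier_mat m m"
    using ec Winv(1) by (simp add: tau_def kappa_def rho_def)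
  note tinv = mat_inv_props[OF assms(9) tauc]
  define M where "M = Amat N m \<alpha> V - z \<cdot>\<^sub>m 1\<^sub>m (2 * N)"
  have Mc: "M \<in> carrier_mat (N+N) (N+N)" using Vc unfolding M_def by (auto simp: Amat_def Dmat_def)
  note Minv = mat_inv_props[OF assms(7)[folded M_def] Mc]
  define Qb where "Qb = (let Q11 = - (z \<cdot>\<^sub>m (rho N V z * mat_inv V)) - theta N m \<alpha> V z;
             Q12 = - rho N V z + z \<cdot>\<^sub>m theta N m \<alpha> V z;
             Q21 = z \<cdot>\<^sub>m Q11 + mat_inv V;
             Q22 = z \<cdot>\<^sub>m Q12 in four_block_mat Q11 Q12 Q21 Q22)"
  have MQ: "M * Qb = four_block_mat (mat_inv V) (0\<^sub>m N N) (0\<^sub>m N N) (1\<^sub>m N)"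
    unfolding M_def Mblock[OF Vc] Qb_def Let_def theta_def
    apply (rule core[OF Vc Vinv(1) Winv(1)[folded rho_def] Dc ec tinv(1) Vinv(2) Winv(2,3)[folded rho_def] De[OF assms(3)]])
    using tinv(2) apply (simp add: tau_def kappa_def)
    by (simp add: Tmat_def)
  have Qbc: "Qb \<in> carrier_mat (N+N) (N+N)"
    unfolding Qb_def Let_def theta_def Tmat_def using Winv(1)[folded rho_def] Vinv(1) ec tinv(1)
    by (intro four_block_carrier_mat) auto
  have "mat_inv M * CG N \<alpha> V = mat_inv M * (complex_of_real (1 / (2 * \<alpha>)) \<cdot>\<^sub>m (M * Qb))"
    unfolding MQ CG_def ..
  also have "\<dots> = complex_of_real (1 / (2 * \<alpha>)) \<cdot>\<^sub>m ((mat_inv M * M) * Qb)"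
    using Minv(1) Mc Qbc by (simp add: mSr carrier_matD)
  also have "\<dots> = complex_of_real (1 / (2 * \<alpha>)) \<cdot>\<^sub>m Qb" using Minv(3) Qbc by simp
  finally show ?thesis unfolding M_def Qb_def Let_def .
qed

end
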